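(* Under the standing assumptions below, for every $p>p_k$ there is exactly one $\rho\in(\rho_k,\rho_{\max})$ with $\varPhi_k(p,\rho)=0$.
   Context: Standing assumptions: $\varGamma_k,h_k:(0,\infty)\to\mathbb R$ are twice continuously differentiable and satisfy (C1) $\varGamma_k'\le 0$, $(\rho\varGamma_k(\rho))'\ge 0$, $(\rho\varGamma_k(\rho))''\ge0$; (C2) $\lim_{\rho\to+\infty}\varGamma_k(\rho)=\varGamma_\infty>0$ and $\varGamma_k(\rho)\le\varGamma_\infty+2$ for all $\rho>0$; (C3) $h_k'\ge0$, $h_k''\ge0$. A reference state $\rho_k>0$, $p_k>0$ is given with $e_k:=\dfrac{p_k-h_k(\rho_k)}{\varGamma_k(\rho_k)\rho_k}\ge 0$. The Hugoniot function is $$\varPhi_k(p,\rho):=\varGamma_k(\rho_k)\rho_k\,(p-h_k(\rho))-\varGamma_k(\rho)\rho\,(p_k-h_k(\rho_k))-\tfrac12\varGamma_k(\rho_k)(p+p_k)\varGamma_k(\rho)(\rho-\rho_k).$$ $\rho_{\max}$ denotes the unique $\rho\in(\rho_k,\infty)$ with $(\rho-\rho_k)\varGamma_k(\rho)=2\rho_k$. *)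

theory Defs
  imports "HOL-Analysis.Analysis"
begin

definition hugoniot :: "(real \<Rightarrow> real) \<Rightarrow> (real \<Rightarrow> real) \<Rightarrow> real \<Rightarrow> real \<Rightarrow> real \<Rightarrow> real \<Rightarrow> real" where
  "hugoniot G h rk pk p \<rho> =
     G rk * rk * (p - h \<rho>) - G \<rho> * \<rho> * (pk - h rk)
     - (1/2) * G rk * (p + pk) * G \<rho> * (\<rho> - rk)"

definition rho_max :: "(real \<Rightarrow> real) \<Rightarrow> real \<Rightarrow> real" where
  "rho_max G rk = (THE \<rho>. rk < \<rho> \<and> (\<rho> - rk) * G \<rho> = 2 * rk)"

end

theory Submission
  imports Defs
begin

theorem mainTheorem4:
  fixes G G' G'' h h' h'' :: "real \<Rightarrow> real"
    and Ginf rk pk p :: real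
  assumes G1: "\<And>x. 0 < x \<Longrightarrow> (G has_real_derivative G' x) (at x)"
      and G2: "\<And>x. 0 < x \<Longrightarrow> (G' has_real_derivative G'' x) (at x)"
      and G2c: "continuous_on {0<..} G''"
      and h1: "\<And>x. 0 < x \<Longrightarrow> (h has_real_derivative h' x) (at x)"
      and h2: "\<And>x. 0 < x \<Longrightarrow> (h' has_real_derivative h'' x) (at x)"
      and h2c: "continuous_on {0<..} h''"
      and C1a: "\<And>x. 0 < x \<Longrightarrow> G' x \<le> 0"
      and C1b: "\<And>x. 0 < x \<Longrightarrow> G x + x * G' x \<ge> 0"
      and C1c: "\<And>x. 0 < x \<Longrightarrow> 2 * G' x + x * G'' x \<ge> 0"
      and C2a: "(G \<longlongrightarrow> Ginf) at_top" and C2b: "Ginf > 0"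
      and C2c: "\<And>x. 0 < x \<Longrightarrow> G x \<le> Ginf + 2"
      and C3a: "\<And>x. 0 < x \<Longrightarrow> h' x \<ge> 0"
      and C3b: "\<And>x. 0 < x \<Longrightarrow> h'' x \<ge> 0"
      and rk: "rk > 0" and pk: "pk > 0"
      and ek: "(pk - h rk) / (G rk * rk) \<ge> 0"
      and p: "p > pk"
  shows "\<exists>!\<rho>. rk < \<rho> \<and> \<rho> < rho_max G rk \<and> hugoniot G h rk pk p \<rho> = 0"
proof -
  have Gge: "G x \<ge> Ginf" if x: "0 < x" for x
  proof -
    have "eventually (\<lambda>y. G y \<le> G x) at_top"
      unfolding eventually_at_top_linorder
    proof (intro exI allI impI)
      fix y assume "y \<ge> x"
      show "G y \<le> G x"
      proof (rule DERIV_nonpos_imp_nonincreasing[of x y G])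
        show "x \<le> y" by fact
        fix z assume "x \<le> z" "z \<le> y"
        hence z: "0 < z" using x by linarith
        show "\<exists>d. (G has_real_derivative d) (at z) \<and> d \<le> 0"
          using G1[OF z] C1a[OF z] by blast
      qed
    qed
    thus ?thesis using tendsto_upperbound[OF C2a] by auto
  qed
  have Gpos: "G x > 0" if "0 < x" for x using Gge[OF that] C2b by linarith
  define A where "A = G rk * rk"
  define B where "B = pk - h rk"
  have A: "A > 0" using Gpos[OF rk] rk by (simp add: A_def)
  have B: "B \<ge> 0" using ek A unfolding A_def B_def
    by (simp add: zero_le_divide_iff)
  define f where "f x = (x - rk) * G x" for x
  have fder: "(f has_real_derivative (G x + (x - rk) * G' x)) (at x)" if "0 < x" for x
    unfolding f_def[abs_def] using that
    by (auto intro!: derivative_eq_intros G1 simp: algebra_simps)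
  have fdpos: "G x + (x - rk) * G' x > 0" if "0 < x" for x
  proof -
    have "G x + x * G' x \<ge> 0" using C1b that .
    moreover have "- rk * G' x \<ge> 0" using C1a[OF that] rk by (simp add: mult_nonneg_nonpos)
    moreover have "G x > 0" using Gpos that .
    moreover have e: "G x + (x - rk) * G' x = (G x + x * G' x) + (- rk * G' x)"
      by (simp add: algebra_simps)
    moreover have "G' x = 0 \<or> - rk * G' x > 0" using C1a[OF that] rk
      by (auto simp: mult_pos_neg order_le_less)
    ultimately show ?thesis by (auto simp: e)
  qed
  have fmono: "f a < f b" if "rk \<le> a" "a < b" for a b
  proof (rule DERIV_pos_imp_increasing[OF \<open>a < b\<close>])
    fix z assume "a \<le> z" "z \<le> b"
    hence z: "0 < z" using that rk by linarith
    show "\<exists>d. (f has_real_derivative d) (at z) \<and> d > 0" using fder[OF z] fdpos[OF z] by blast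
  qed
  have fcont: "isCont f x" if "0 < x" for x using fder[OF that] DERIV_isCont by blast
  define b0 where "b0 = rk + 2 * rk / Ginf + 1"
  have b0pos: "0 < b0" using rk C2b by (simp add: b0_def add_pos_nonneg)
  have "f b0 \<ge> (b0 - rk) * Ginf" unfolding f_def using Gge[OF b0pos]
    using Gge[of b0] rk C2b by (intro mult_left_mono) (auto simp: b0_def)
  also have "(b0 - rk) * Ginf = 2 * rk + Ginf" using C2b by (simp add: b0_def field_simps)
  finally have fb0: "f b0 \<ge> 2 * rk" using C2b by linarith
  have frk: "f rk = 0" by (simp add: f_def)
  have "rk \<le> b0" using rk C2b by (simp add: b0_def)
  then obtain m where m: "rk \<le> m" "m \<le> b0" "f m = 2 * rk"
    using IVT[of f rk "2*rk" b0] frk fb0 rk fcont by force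
  have mgt: "rk < m" using m frk rk by (cases "m = rk") auto
  have rmax: "rho_max G rk = m"
    unfolding rho_max_def
  proof (rule the_equality)
    show "rk < m \<and> (m - rk) * G m = 2 * rk" using mgt m by (simp add: f_def)
  next
    fix y assume y: "rk < y \<and> (y - rk) * G y = 2 * rk"
    show "y = m"
    proof (rule ccontr)
      assume "y \<noteq> m"
      hence "y < m \<or> m < y" by linarith
      thus False using fmono[of y m] fmono[of m y] y m mgt unfolding f_def by force
    qed
  qed
  define \<Phi> where "\<Phi> = hugoniot G h rk pk p"
  define D where "D x = - A * h' x - B * (G x + x * G' x) - (1/2) * G rk * (p + pk) * (G x + (x - rk) * G' x)" for x
  have \<Phi>der: "(\<Phi> has_real_derivative D x) (at x)" if "0 < x" for x
    unfolding \<Phi>_def hugoniot_def[abs_def] D_def A_def B_def using that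
    by (auto intro!: derivative_eq_intros G1 h1 simp: field_simps)
  have Dneg: "D x < 0" if "0 < x" for x
  proof -
    have "A * h' x \<ge> 0" using A C3a[OF that] by simp
    moreover have "B * (G x + x * G' x) \<ge> 0" using B C1b[OF that] by simp
    moreover have "(1/2) * G rk * (p + pk) * (G x + (x - rk) * G' x) > 0"
      using Gpos[OF rk] p pk fdpos[OF that] by simp
    ultimately show ?thesis unfolding D_def by linarith
  qed
  have \<Phi>mono: "\<Phi> a > \<Phi> b" if "rk \<le> a" "a < b" for a b
  proof (rule DERIV_neg_imp_decreasing[OF \<open>a < b\<close>])
    fix z assume "a \<le> z" "z \<le> b"
    hence z: "0 < z" using that rk by linarith
    show "\<exists>d. (\<Phi> has_real_derivative d) (at z) \<and> d < 0" using \<Phi>der[OF z] Dneg[OF z] by blast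
  qed
  have \<Phi>cont: "isCont \<Phi> x" if "0 < x" for x using \<Phi>der[OF that] DERIV_isCont by blast
  have \<Phi>rk: "\<Phi> rk > 0"
  proof -
    have "\<Phi> rk = A * (p - pk)" unfolding \<Phi>_def hugoniot_def A_def by (simp add: algebra_simps)
    thus ?thesis using A p by simp
  qed
  have hm: "h m \<ge> h rk"
  proof (rule DERIV_nonneg_imp_nondecreasing[of rk m h])
    show "rk \<le> m" using m by simp
    fix z assume "rk \<le> z" "z \<le> m"
    hence z: "0 < z" using rk by linarith
    show "\<exists>d. (h has_real_derivative d) (at z) \<and> d \<ge> 0" using h1[OF z] C3a[OF z] by blast
  qed
  have Cm: "m * G m \<ge> A"
  proof -
    have "rk * G rk \<le> m * G m"
    proof (rule DERIV_nonneg_imp_nondecreasing[of rk m "\<lambda>x. x * G x"])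
      show "rk \<le> m" using m by simp
      fix x assume x: "rk \<le> x" "x \<le> m"
      hence "0 < x" using rk by linarith
      show "\<exists>y. ((\<lambda>x. x * G x) has_real_derivative y) (at x) \<and> 0 \<le> y"
        using C1b[OF \<open>0 < x\<close>] G1[OF \<open>0 < x\<close>]
        by (intro exI[of _ "G x + x * G' x"]) (auto intro!: derivative_eq_intros simp: algebra_simps)
    qed
    thus ?thesis unfolding A_def by (simp add: mult.commute)
  qed
  have \<Phi>m: "\<Phi> m < 0"
  proof -
    have e: "G m * (m - rk) = 2 * rk" using m by (simp add: f_def mult.commute)
    have "\<Phi> m = A * (p - h m) - G m * m * B - (1/2) * G rk * (p + pk) * (G m * (m - rk))"
      unfolding \<Phi>_def hugoniot_def A_def B_def by (simp add: algebra_simps)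
    also have "\<dots> = - A * (pk + h m) - m * G m * B" unfolding e A_def by (simp add: algebra_simps)
    finally have eq: "\<Phi> m = - A * (pk + h m) - m * G m * B" .
    have "- A * (pk + h m) \<le> - A * (pk + h rk)" using A hm by simp
    moreover have "- (m * G m * B) \<le> - (A * B)" using Cm B by (simp add: mult_right_mono)
    ultimately have "\<Phi> m \<le> - A * (pk + h rk) - A * B" using eq by linarith
    also have "\<dots> = - 2 * A * pk" unfolding B_def by (simp add: algebra_simps)
    finally have "\<Phi> m \<le> - 2 * A * pk" .
    moreover have "A * pk > 0" using A pk by simp
    ultimately show ?thesis by linarith
  qed
  obtain r where r: "rk \<le> r" "r \<le> m" "\<Phi> r = 0"
    using IVT2[of \<Phi> m 0 rk] \<Phi>rk \<Phi>m mgt rk \<Phi>cont by force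
  have r2: "rk < r" "r < m" using r \<Phi>rk \<Phi>m by (auto simp: order_le_less)
  show ?thesis unfolding rmax \<Phi>_def[symmetric]
  proof (rule ex1I[of _ r])
    show "rk < r \<and> r < m \<and> \<Phi> r = 0" using r r2 by simp
  next
    fix y assume y: "rk < y \<and> y < m \<and> \<Phi> y = 0"
    show "y = r"
    proof (rule ccontr)
      assume "y \<noteq> r"
      hence "y < r \<or> r < y" by linarith
      thus False using \<Phi>mono[of y r] \<Phi>mono[of r y] y r r2 by force
    qed
  qed
qed

end
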